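(* Let $G$ be a finite group with $Z(G)\neq 1$ and $\mathcal{D}(G/Z(G))=2$. Then $\mathcal{D}(G)-\mathcal{D}(Z(G))\ge 4$.
   Context: $\mathcal{D}(X)$ denotes the number of conjugacy classes of nontrivial subgroups $Y$ of the finite group $X$ with $N_X(Y)\neq Y$. $Z(G)$ is the center of $G$. *)

theory Defs
  imports "HOL-Algebra.Algebra"
begin

definition center :: "('a, 'b) monoid_scheme \<Rightarrow> 'a set" where
  "center G = {z \<in> carrier G. \<forall>g \<in> carrier G. z \<otimes>\<^bsub>G\<^esub> g = g \<otimes>\<^bsub>G\<^esub> z}"

definition subgroup_conj_class :: "('a, 'b) monoid_scheme \<Rightarrow> 'a set \<Rightarrow> 'a set set" where
  "subgroup_conj_class G Y = {g <#\<^bsub>G\<^esub> Y #>\<^bsub>G\<^esub> inv\<^bsub>G\<^esub> g | g. g \<in> carrier G}"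

definition calD :: "('a, 'b) monoid_scheme \<Rightarrow> nat" where
  "calD G = card (subgroup_conj_class G `
      {Y. subgroup Y G \<and> Y \<noteq> {one G} \<and> normalizer G Y \<noteq> Y})"

end

theory Submission
  imports Defs "HOL-Computational_Algebra.Primes"
begin
lemma (in group) conj_eq_image:
  assumes "g \<in> carrier G" "Y \<subseteq> carrier G"
  shows "g <# Y #> inv g = (\<lambda>y. g \<otimes> y \<otimes> inv g) ` Y"
  unfolding l_coset_def r_coset_def by auto

lemma (in group) normalizer_char:
  assumes "Y \<subseteq> carrier G"
  shows "normalizer G Y = {g \<in> carrier G. g <# Y #> inv g = Y}"
  using assms unfolding normalizer_def stabilizer_def by auto

lemma (in group) center_subgroup: "subgroup (center G) G"
proof
  show "center G \<subseteq> carrier G" unfolding center_def by auto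
next
  fix x y assume "x \<in> center G" "y \<in> center G"
  then have xc: "x \<in> carrier G" "\<And>g. g \<in> carrier G \<Longrightarrow> x \<otimes> g = g \<otimes> x"
    and yc: "y \<in> carrier G" "\<And>g. g \<in> carrier G \<Longrightarrow> y \<otimes> g = g \<otimes> y"
    unfolding center_def by auto
  show "x \<otimes> y \<in> center G" unfolding center_def
  proof (safe)
    show "x \<otimes> y \<in> carrier G" using xc(1) yc(1) by simp
    fix g assume g: "g \<in> carrier G"
    have "x \<otimes> y \<otimes> g = x \<otimes> (g \<otimes> y)" using xc(1) yc(1) g yc(2)[OF g] by (simp add: m_assoc)
    also have "\<dots> = (x \<otimes> g) \<otimes> y" using xc(1) yc(1) g by (simp add: m_assoc)
    also have "\<dots> = g \<otimes> (x \<otimes> y)" using xc(1) yc(1) g xc(2)[OF g] by (simp add: m_assoc)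
    finally show "x \<otimes> y \<otimes> g = g \<otimes> (x \<otimes> y)" .
  qed
next
  show "\<one> \<in> center G" unfolding center_def by auto
next
  fix x assume x: "x \<in> center G"
  show "inv x \<in> center G" unfolding center_def
  proof (safe)
    show "inv x \<in> carrier G" using x unfolding center_def by auto
    fix g assume g: "g \<in> carrier G"
    have xc: "x \<in> carrier G" and c: "x \<otimes> g = g \<otimes> x" using x g unfolding center_def by auto
    have "inv x \<otimes> g = inv x \<otimes> (g \<otimes> x) \<otimes> inv x" using xc g by (simp add: m_assoc)
    also have "\<dots> = inv x \<otimes> (x \<otimes> g) \<otimes> inv x" using c by simp
    also have "\<dots> = g \<otimes> inv x" using xc g by (simp add: m_assoc[symmetric])
    finally show "inv x \<otimes> g = g \<otimes> inv x" .
  qed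
qed

lemma (in group) center_conj:
  assumes "z \<in> center G" "g \<in> carrier G"
  shows "g \<otimes> z \<otimes> inv g = z"
proof -
  have "z \<in> carrier G" "z \<otimes> g = g \<otimes> z" using assms unfolding center_def by auto
  then show ?thesis using assms(2) by (metis inv_closed m_assoc r_inv r_one)
qed

lemma (in group) conj_central_set:
  assumes "Y \<subseteq> center G" "g \<in> carrier G"
  shows "g <# Y #> inv g = Y"
proof -
  have "Y \<subseteq> carrier G" using assms(1) unfolding center_def by auto
  then show ?thesis using assms center_conj
    by (auto simp: conj_eq_image intro!: rev_image_eqI)
qed

lemma (in group) center_normal: "center G \<lhd> G"
proof (rule normal_invI)
  show "subgroup (center G) G" by (rule center_subgroup)
  fix x h assume "x \<in> carrier G" "h \<in> center G"
  then show "x \<otimes> h \<otimes> inv x \<in> center G" using center_conj by simp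
qed

lemma (in group) cancel_rl [simp]:
  "x \<in> carrier G \<Longrightarrow> y \<in> carrier G \<Longrightarrow> x \<otimes> (inv x \<otimes> y) = y"
  by (simp add: m_assoc[symmetric])

lemma (in group) cancel_lr [simp]:
  "x \<in> carrier G \<Longrightarrow> y \<in> carrier G \<Longrightarrow> inv x \<otimes> (x \<otimes> y) = y"
  by (simp add: m_assoc[symmetric])

lemma (in group) conj_subset:
  assumes "g \<in> carrier G" "Y \<subseteq> carrier G"
  shows "g <# Y #> inv g \<subseteq> carrier G"
  using assms by (auto simp: conj_eq_image)

lemma (in group) conj_subgroup:
  assumes "g \<in> carrier G" "subgroup H G"
  shows "subgroup (g <# H #> inv g) G"
  using subgroup_conjugation_is_surj1[of "inv g" H] assms by simp

lemma (in group) conj_comp: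
  assumes "g \<in> carrier G" "h \<in> carrier G" "Y \<subseteq> carrier G"
  shows "g <# (h <# Y #> inv h) #> inv g = (g \<otimes> h) <# Y #> inv (g \<otimes> h)"
proof -
  have "h <# Y #> inv h \<subseteq> carrier G" using assms by (simp add: conj_subset)
  then have "g <# (h <# Y #> inv h) #> inv g = (\<lambda>y. g \<otimes> y \<otimes> inv g) ` ((\<lambda>y. h \<otimes> y \<otimes> inv h) ` Y)"
    using assms by (simp add: conj_eq_image)
  also have "\<dots> = (\<lambda>y. (g \<otimes> h) \<otimes> y \<otimes> inv (g \<otimes> h)) ` Y"
    unfolding image_image
  proof (rule image_cong[OF refl])
    fix y assume "y \<in> Y"
    then have y: "y \<in> carrier G" using assms by auto
    show "g \<otimes> (h \<otimes> y \<otimes> inv h) \<otimes> inv g = g \<otimes> h \<otimes> y \<otimes> inv (g \<otimes> h)"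
      using assms y by (simp add: inv_mult_group m_assoc)
  qed
  also have "\<dots> = (g \<otimes> h) <# Y #> inv (g \<otimes> h)" using assms by (simp add: conj_eq_image)
  finally show ?thesis .
qed

lemma (in group) conj_one:
  assumes "Y \<subseteq> carrier G"
  shows "\<one> <# Y #> inv \<one> = Y"
proof -
  have "(\<lambda>y. \<one> \<otimes> y \<otimes> \<one>) ` Y = (\<lambda>y. y) ` Y" using assms by (intro image_cong) auto
  then show ?thesis using conj_eq_image[OF one_closed assms] by simp
qed

lemma (in group) conj_inv_cancel:
  assumes "g \<in> carrier G" "Y \<subseteq> carrier G"
  shows "inv g <# (g <# Y #> inv g) #> inv (inv g) = Y"
proof -
  have "inv g <# (g <# Y #> inv g) #> inv (inv g) = (inv g \<otimes> g) <# Y #> inv (inv g \<otimes> g)"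
    using assms by (intro conj_comp) auto
  then show ?thesis using assms conj_one by simp
qed

lemma (in group) conj_mono:
  assumes "g \<in> carrier G" "A \<subseteq> B" "B \<subseteq> carrier G"
  shows "g <# A #> inv g \<subseteq> g <# B #> inv g"
  using assms by (auto simp: conj_eq_image)

lemma (in group) conj_card:
  assumes "g \<in> carrier G" "Y \<subseteq> carrier G"
  shows "card (g <# Y #> inv g) = card Y"
proof -
  have "inj_on (\<lambda>y. g \<otimes> y \<otimes> inv g) Y"
    unfolding inj_on_def using assms conjugation_is_inj by blast
  then show ?thesis using assms by (simp add: conj_eq_image card_image)
qed

lemma (in group) class_self:
  assumes "Y \<subseteq> carrier G"
  shows "Y \<in> subgroup_conj_class G Y"
  unfolding subgroup_conj_class_def using assms conj_one[OF assms] by (metis (mono_tags, lifting) mem_Collect_eq one_closed)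

lemma (in group) class_memE:
  assumes "B \<in> subgroup_conj_class G A"
  obtains g where "g \<in> carrier G" "B = g <# A #> inv g"
  using assms unfolding subgroup_conj_class_def by auto

lemma (in group) class_eq:
  assumes "B \<in> subgroup_conj_class G A" "A \<subseteq> carrier G"
  shows "subgroup_conj_class G B = subgroup_conj_class G A"
proof -
  obtain g where g: "g \<in> carrier G" "B = g <# A #> inv g" using assms class_memE by blast
  show ?thesis
  proof
    show "subgroup_conj_class G B \<subseteq> subgroup_conj_class G A"
    proof
      fix C assume "C \<in> subgroup_conj_class G B"
      then obtain h where h: "h \<in> carrier G" "C = h <# B #> inv h" using class_memE by blast
      then have "C = (h \<otimes> g) <# A #> inv (h \<otimes> g)" using g assms by (simp add: conj_comp)
      then show "C \<in> subgroup_conj_class G A" unfolding subgroup_conj_class_def using h g by blast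
    qed
  next
    show "subgroup_conj_class G A \<subseteq> subgroup_conj_class G B"
    proof
      fix C assume "C \<in> subgroup_conj_class G A"
      then obtain h where h: "h \<in> carrier G" "C = h <# A #> inv h" using class_memE by blast
      have A: "A = inv g <# B #> inv (inv g)" using g assms conj_inv_cancel by metis
      have Bc: "B \<subseteq> carrier G" using g assms conj_subset by simp
      have e: "h <# (inv g <# B #> inv (inv g)) #> inv h = (h \<otimes> inv g) <# B #> inv (h \<otimes> inv g)"
        by (rule conj_comp) (use g h Bc in auto)
      have "C = (h \<otimes> inv g) <# B #> inv (h \<otimes> inv g)"
        using h(2) e A by simp
      then show "C \<in> subgroup_conj_class G B" unfolding subgroup_conj_class_def using h g by blast
    qed
  qed
qed

lemma (in group) class_normal:
  assumes "\<And>g. g \<in> carrier G \<Longrightarrow> g <# Y #> inv g = Y"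
  shows "subgroup_conj_class G Y = {Y}"
  unfolding subgroup_conj_class_def using assms by auto

lemma (in group) subgroup_in_normalizer:
  assumes "subgroup H G"
  shows "H \<subseteq> normalizer G H"
proof
  fix h assume h: "h \<in> H"
  have Hc: "H \<subseteq> carrier G" using assms subgroup.subset by blast
  have hc: "h \<in> carrier G" using h Hc by auto
  have "h <# H #> inv h = H"
  proof
    show "h <# H #> inv h \<subseteq> H" using assms h Hc hc
      by (auto simp: conj_eq_image subgroup.m_closed subgroup.m_inv_closed)
  next
    show "H \<subseteq> h <# H #> inv h"
    proof
      fix x assume x: "x \<in> H"
      have xc: "x \<in> carrier G" using x Hc by auto
      have "inv h \<otimes> x \<otimes> h \<in> H" using assms h x by (simp add: subgroup.m_closed subgroup.m_inv_closed)
      moreover have "x = h \<otimes> (inv h \<otimes> x \<otimes> h) \<otimes> inv h" using hc xc by (simp add: m_assoc)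
      ultimately show "x \<in> h <# H #> inv h" using hc Hc by (simp add: conj_eq_image)
    qed
  qed
  then show "h \<in> normalizer G H" using Hc hc by (simp add: normalizer_char)
qed

lemma (in group) center_conj_self:
  assumes "g \<in> carrier G"
  shows "g <# center G #> inv g = center G"
  using conj_central_set assms by simp

lemma (in group) class_center_inv:
  assumes "B \<in> subgroup_conj_class G A" "A \<subseteq> carrier G"
  shows "(B \<subseteq> center G \<longleftrightarrow> A \<subseteq> center G) \<and> (center G \<subseteq> B \<longleftrightarrow> center G \<subseteq> A)"
proof -
  obtain g where g: "g \<in> carrier G" "B = g <# A #> inv g" using assms class_memE by blast
  have Zc: "center G \<subseteq> carrier G" unfolding center_def by auto
  have Bc: "B \<subseteq> carrier G" using g assms conj_subset by simp
  have A: "A = inv g <# B #> inv (inv g)" using g assms conj_inv_cancel by metis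
  have ig: "inv g \<in> carrier G" using g by simp
  have "B \<subseteq> center G \<Longrightarrow> A \<subseteq> center G"
    using A conj_mono[OF ig _ Zc, of B] center_conj_self[OF ig] by simp
  moreover have "A \<subseteq> center G \<Longrightarrow> B \<subseteq> center G"
    using g conj_mono[OF g(1) _ Zc, of A] center_conj_self[OF g(1)] by simp
  moreover have "center G \<subseteq> B \<Longrightarrow> center G \<subseteq> A"
    using A conj_mono[OF ig _ Bc, of "center G"] center_conj_self[OF ig] by simp
  moreover have "center G \<subseteq> A \<Longrightarrow> center G \<subseteq> B"
    using g conj_mono[OF g(1) _ assms(2), of "center G"] center_conj_self[OF g(1)] by simp
  ultimately show ?thesis by blast
qed

lemma group_hom_conj_image:
  assumes "group_hom G Q f" "g \<in> carrier G" "Y \<subseteq> carrier G"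
  shows "f g <#\<^bsub>Q\<^esub> (f ` Y) #>\<^bsub>Q\<^esub> inv\<^bsub>Q\<^esub> (f g) = f ` (g <#\<^bsub>G\<^esub> Y #>\<^bsub>G\<^esub> inv\<^bsub>G\<^esub> g)"
proof -
  interpret h: group_hom G Q f by fact
  have fY: "f ` Y \<subseteq> carrier Q" using assms(3) by auto
  have fg: "f g \<in> carrier Q" using assms(2) by simp
  have "f g <#\<^bsub>Q\<^esub> (f ` Y) #>\<^bsub>Q\<^esub> inv\<^bsub>Q\<^esub> (f g) = (\<lambda>y. f g \<otimes>\<^bsub>Q\<^esub> y \<otimes>\<^bsub>Q\<^esub> inv\<^bsub>Q\<^esub> (f g)) ` (f ` Y)"
    using h.H.conj_eq_image[OF fg fY] .
  also have "\<dots> = f ` ((\<lambda>y. g \<otimes>\<^bsub>G\<^esub> y \<otimes>\<^bsub>G\<^esub> inv\<^bsub>G\<^esub> g) ` Y)"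
    unfolding image_image
  proof (rule image_cong[OF refl])
    fix y assume "y \<in> Y"
    then have y: "y \<in> carrier G" using assms by auto
    show "f g \<otimes>\<^bsub>Q\<^esub> f y \<otimes>\<^bsub>Q\<^esub> inv\<^bsub>Q\<^esub> f g = f (g \<otimes>\<^bsub>G\<^esub> y \<otimes>\<^bsub>G\<^esub> inv\<^bsub>G\<^esub> g)"
      using y assms(2) by simp
  qed
  also have "\<dots> = f ` (g <#\<^bsub>G\<^esub> Y #>\<^bsub>G\<^esub> inv\<^bsub>G\<^esub> g)"
    using h.G.conj_eq_image[OF assms(2,3)] by simp
  finally show ?thesis .
qed

context group
begin

abbreviation "ZZ \<equiv> center G"
abbreviation "QQ \<equiv> G Mod (center G)"
abbreviation "cz \<equiv> (\<lambda>a. center G #> a)"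

lemma Z_normal: "normal (center G) G" using center_normal by simp

lemma Q_group: "group QQ"
  using normal.factorgroup_is_group[OF Z_normal] .

lemma cz_hom: "group_hom G QQ cz"
  unfolding group_hom_def group_hom_axioms_def
  using normal.r_coset_hom_Mod[OF Z_normal] Q_group is_group by blast

lemma Z_sub: "subgroup (center G) G" by (rule center_subgroup)

lemma Zc: "center G \<subseteq> carrier G" unfolding center_def by auto

lemma carrier_Q: "carrier QQ = cz ` carrier G"
  by (simp add: carrier_FactGroup)

lemma one_Q: "\<one>\<^bsub>QQ\<^esub> = center G" by simp

lemma cz_coset_sub:
  assumes "subgroup Y G" "center G \<subseteq> Y" "y \<in> Y"
  shows "center G #> y \<subseteq> Y"
proof
  fix x assume "x \<in> center G #> y"
  then obtain z where "z \<in> center G" "x = z \<otimes> y" unfolding r_coset_def by auto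
  then show "x \<in> Y" using assms subgroup.m_closed[OF assms(1)] by blast
qed

lemma union_pi:
  assumes "subgroup Y G" "center G \<subseteq> Y"
  shows "\<Union>(cz ` Y) = Y"
proof
  show "\<Union>(cz ` Y) \<subseteq> Y" using cz_coset_sub[OF assms] by auto
next
  show "Y \<subseteq> \<Union>(cz ` Y)"
  proof
    fix y assume "y \<in> Y"
    then have "y \<in> center G #> y" using rcos_self[OF _ Z_sub] assms subgroup.subset by blast
    then show "y \<in> \<Union>(cz ` Y)" using \<open>y \<in> Y\<close> by blast
  qed
qed

definition "WW = {Y. subgroup Y G \<and> center G \<subseteq> Y}"

lemma cz_inj: "inj_on (image cz) WW"
proof (rule inj_onI)
  fix A B assume A: "A \<in> WW" and B: "B \<in> WW" and e: "cz ` A = cz ` B"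
  have a: "\<Union>(cz ` A) = A" using A unfolding WW_def by (intro union_pi) auto
  have b: "\<Union>(cz ` B) = B" using B unfolding WW_def by (intro union_pi) auto
  have "A = \<Union>(cz ` A)" using a by (rule sym)
  also have "\<dots> = \<Union>(cz ` B)" using e by (rule arg_cong)
  also have "\<dots> = B" by (rule b)
  finally show "A = B" .
qed

lemma class_in_WW:
  assumes "Y \<in> WW"
  shows "subgroup_conj_class G Y \<subseteq> WW"
proof
  fix B assume B: "B \<in> subgroup_conj_class G Y"
  have Yc: "Y \<subseteq> carrier G" using assms unfolding WW_def using subgroup.subset by blast
  obtain g where g: "g \<in> carrier G" "B = g <# Y #> inv g" using B class_memE by blast
  have Ys: "subgroup Y G" "center G \<subseteq> Y" using assms unfolding WW_def by auto
  have "subgroup B G" unfolding g(2) by (rule conj_subgroup[OF g(1) Ys(1)])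
  moreover have "center G \<subseteq> B" using class_center_inv[OF B Yc] Ys(2) by blast
  ultimately show "B \<in> WW" unfolding WW_def by simp
qed

lemma cz_img_subgroup:
  assumes "subgroup Y G"
  shows "subgroup (cz ` Y) QQ"
  using group_hom.subgroup_img_is_subgroup[OF cz_hom assms] .

lemma cz_eq_Z_iff:
  assumes "y \<in> carrier G"
  shows "cz y = center G \<longleftrightarrow> y \<in> center G"
proof
  assume "cz y = center G" then show "y \<in> center G" using coset_join1[OF _ assms Z_sub] by simp
next
  assume "y \<in> center G" then show "cz y = center G" using subgroup.rcos_const[OF Z_sub is_group] by simp
qed

lemma cz_img_one_iff:
  assumes "subgroup Y G" "center G \<subseteq> Y"
  shows "cz ` Y = {\<one>\<^bsub>QQ\<^esub>} \<longleftrightarrow> Y = center G"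
proof
  assume h: "cz ` Y = {\<one>\<^bsub>QQ\<^esub>}"
  have "Y \<subseteq> center G"
  proof
    fix y assume "y \<in> Y"
    then have "cz y = center G" "y \<in> carrier G" using h subgroup.subset[OF assms(1)] by auto
    then show "y \<in> center G" using cz_eq_Z_iff by blast
  qed
  then show "Y = center G" using assms by blast
next
  assume "Y = center G"
  moreover have "center G \<noteq> {}" using Z_sub subgroup.one_closed by blast
  ultimately show "cz ` Y = {\<one>\<^bsub>QQ\<^esub>}" using cz_eq_Z_iff Zc by auto
qed

lemma cz_conj:
  assumes "g \<in> carrier G" "Y \<subseteq> carrier G"
  shows "cz g <#\<^bsub>QQ\<^esub> (cz ` Y) #>\<^bsub>QQ\<^esub> inv\<^bsub>QQ\<^esub> (cz g) = cz ` (g <# Y #> inv g)"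
  using group_hom_conj_image[OF cz_hom assms] .

lemma cz_class:
  assumes "Y \<subseteq> carrier G"
  shows "subgroup_conj_class QQ (cz ` Y) = (image cz) ` subgroup_conj_class G Y"
proof -
  have "subgroup_conj_class QQ (cz ` Y) = (\<lambda>a. a <#\<^bsub>QQ\<^esub> (cz ` Y) #>\<^bsub>QQ\<^esub> inv\<^bsub>QQ\<^esub> a) ` (cz ` carrier G)"
    unfolding subgroup_conj_class_def carrier_Q by (simp add: setcompr_eq_image)
  also have "\<dots> = (\<lambda>g. cz ` (g <# Y #> inv g)) ` carrier G"
    unfolding image_image using cz_conj[OF _ assms] by (intro image_cong) auto
  also have "\<dots> = (image cz) ` subgroup_conj_class G Y"
    unfolding subgroup_conj_class_def by (simp add: setcompr_eq_image image_image)
  finally show ?thesis .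
qed

lemma cz_normalizer_iff:
  assumes Y: "subgroup Y G" "center G \<subseteq> Y"
  shows "normalizer QQ (cz ` Y) \<noteq> cz ` Y \<longleftrightarrow> normalizer G Y \<noteq> Y"
proof -
  interpret Q: group QQ by (rule Q_group)
  have Yc: "Y \<subseteq> carrier G" using Y subgroup.subset by blast
  have D: "subgroup (cz ` Y) QQ" using cz_img_subgroup Y by simp
  have Dc: "cz ` Y \<subseteq> carrier QQ" using D subgroup.subset by blast
  have NQ: "normalizer QQ (cz ` Y) = {a \<in> carrier QQ. a <#\<^bsub>QQ\<^esub> (cz ` Y) #>\<^bsub>QQ\<^esub> inv\<^bsub>QQ\<^esub> a = cz ` Y}"
    using Q.normalizer_char[OF Dc] .
  have NG: "normalizer G Y = {g \<in> carrier G. g <# Y #> inv g = Y}" using normalizer_char[OF Yc] .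
  have key: "cz g \<in> normalizer QQ (cz ` Y) \<longleftrightarrow> g \<in> normalizer G Y" if g: "g \<in> carrier G" for g
  proof -
    have W1: "Y \<in> WW" using Y unfolding WW_def by simp
    have "g <# Y #> inv g \<in> subgroup_conj_class G Y" unfolding subgroup_conj_class_def using g by blast
    then have W2: "g <# Y #> inv g \<in> WW" using class_in_WW[OF W1] by blast
    have cg: "cz g \<in> carrier QQ" using g carrier_Q by blast
    have c: "cz g <#\<^bsub>QQ\<^esub> (cz ` Y) #>\<^bsub>QQ\<^esub> inv\<^bsub>QQ\<^esub> (cz g) = cz ` (g <# Y #> inv g)"
      by (rule cz_conj[OF g Yc])
    have "cz g \<in> normalizer QQ (cz ` Y) \<longleftrightarrow> cz g <#\<^bsub>QQ\<^esub> (cz ` Y) #>\<^bsub>QQ\<^esub> inv\<^bsub>QQ\<^esub> (cz g) = cz ` Y"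
      unfolding NQ using cg by (simp only: mem_Collect_eq simp_thms)
    also have "\<dots> \<longleftrightarrow> cz ` (g <# Y #> inv g) = cz ` Y" unfolding c ..
    also have "\<dots> \<longleftrightarrow> g <# Y #> inv g = Y"
    proof
      assume "cz ` (g <# Y #> inv g) = cz ` Y"
      then show "g <# Y #> inv g = Y" by (rule inj_onD[OF cz_inj _ W2 W1])
    next
      assume "g <# Y #> inv g = Y"
      then show "cz ` (g <# Y #> inv g) = cz ` Y" by (rule arg_cong)
    qed
    also have "\<dots> \<longleftrightarrow> g \<in> normalizer G Y" unfolding NG using g by (simp only: mem_Collect_eq simp_thms)
    finally show ?thesis .
  qed
  have memD: "cz g \<in> cz ` Y \<longleftrightarrow> g \<in> Y" if g: "g \<in> carrier G" for g
  proof
    assume "cz g \<in> cz ` Y"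
    then obtain y where y: "y \<in> Y" "cz g = cz y" by auto
    have "g \<in> cz g" using rcos_self[OF g Z_sub] .
    then have "g \<in> cz y" using y(2) by simp
    then show "g \<in> Y" using cz_coset_sub[OF Y y(1)] by blast
  next
    assume "g \<in> Y" then show "cz g \<in> cz ` Y" by (rule imageI)
  qed
  show ?thesis
  proof
    assume h: "normalizer QQ (cz ` Y) \<noteq> cz ` Y"
    have "cz ` Y \<subseteq> normalizer QQ (cz ` Y)" using Q.subgroup_in_normalizer[OF D] .
    then obtain a where a: "a \<in> normalizer QQ (cz ` Y)" "a \<notin> cz ` Y" using h by blast
    then have "a \<in> carrier QQ" using NQ by auto
    then obtain g where g: "g \<in> carrier G" "a = cz g" using carrier_Q by auto
    have "g \<in> normalizer G Y" using key[OF g(1)] a(1) g(2) by simp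
    moreover have "g \<notin> Y" using memD[OF g(1)] a(2) g(2) by simp
    ultimately show "normalizer G Y \<noteq> Y" by blast
  next
    assume h: "normalizer G Y \<noteq> Y"
    have "Y \<subseteq> normalizer G Y" using subgroup_in_normalizer Y by simp
    then obtain g where g: "g \<in> normalizer G Y" "g \<notin> Y" using h by blast
    then have gc: "g \<in> carrier G" using NG by auto
    have "cz g \<in> normalizer QQ (cz ` Y)" using key[OF gc] g(1) by simp
    moreover have "cz g \<notin> cz ` Y" using memD[OF gc] g(2) by simp
    ultimately show "normalizer QQ (cz ` Y) \<noteq> cz ` Y" by blast
  qed
qed

lemma Q_subgroup_pi:
  assumes "subgroup A QQ"
  shows "A = cz ` (\<Union>A)" "subgroup (\<Union>A) G" "center G \<subseteq> \<Union>A"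
proof -
  have char: "\<Union>A = {x \<in> carrier G. cz x \<in> A}"
    using normal.factgroup_subgroup_union_char[OF Z_normal assms] .
  show "subgroup (\<Union>A) G" using normal.factgroup_subgroup_union_subgroup[OF Z_normal assms] .
  have "center G \<in> A" using subgroup.one_closed[OF assms] by simp
  then show "center G \<subseteq> \<Union>A" by blast
  show "A = cz ` (\<Union>A)"
  proof
    show "A \<subseteq> cz ` (\<Union>A)"
    proof
      fix a assume a: "a \<in> A"
      then have "a \<in> carrier QQ" using subgroup.subset[OF assms] by blast
      then obtain x where x: "x \<in> carrier G" "a = cz x" using carrier_Q by auto
      then have "x \<in> \<Union>A" using char a by simp
      then show "a \<in> cz ` (\<Union>A)" using x by blast
    qed
  next
    show "cz ` (\<Union>A) \<subseteq> A" using char by auto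
  qed
qed

definition "UU = {Y. subgroup Y G \<and> center G \<subseteq> Y \<and> Y \<noteq> center G \<and> normalizer G Y \<noteq> Y}"

lemma TQ_eq:
  "{A. subgroup A QQ \<and> A \<noteq> {\<one>\<^bsub>QQ\<^esub>} \<and> normalizer QQ A \<noteq> A} = (image cz) ` UU"
proof
  show "{A. subgroup A QQ \<and> A \<noteq> {\<one>\<^bsub>QQ\<^esub>} \<and> normalizer QQ A \<noteq> A} \<subseteq> (image cz) ` UU"
  proof
    fix A assume "A \<in> {A. subgroup A QQ \<and> A \<noteq> {\<one>\<^bsub>QQ\<^esub>} \<and> normalizer QQ A \<noteq> A}"
    then have A: "subgroup A QQ" "A \<noteq> {\<one>\<^bsub>QQ\<^esub>}" "normalizer QQ A \<noteq> A" by auto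
    note e = Q_subgroup_pi[OF A(1)]
    have "\<Union>A \<noteq> center G" using cz_img_one_iff[OF e(2,3)] A(2) e(1) by auto
    moreover have "normalizer G (\<Union>A) \<noteq> \<Union>A" using cz_normalizer_iff[OF e(2,3)] A(3) e(1) by auto
    ultimately have "\<Union>A \<in> UU" using e unfolding UU_def by simp
    then show "A \<in> (image cz) ` UU" using e(1) by blast
  qed
next
  show "(image cz) ` UU \<subseteq> {A. subgroup A QQ \<and> A \<noteq> {\<one>\<^bsub>QQ\<^esub>} \<and> normalizer QQ A \<noteq> A}"
  proof
    fix A assume "A \<in> (image cz) ` UU"
    then obtain Y where Y: "Y \<in> UU" "A = cz ` Y" by blast
    then have Y': "subgroup Y G" "center G \<subseteq> Y" "Y \<noteq> center G" "normalizer G Y \<noteq> Y"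
      unfolding UU_def by auto
    show "A \<in> {A. subgroup A QQ \<and> A \<noteq> {\<one>\<^bsub>QQ\<^esub>} \<and> normalizer QQ A \<noteq> A}"
      using Y(2) cz_img_subgroup[OF Y'(1)] cz_img_one_iff[OF Y'(1,2)] Y'(3)
        cz_normalizer_iff[OF Y'(1,2)] Y'(4) by simp
  qed
qed

lemma calD_Q: "calD QQ = card (subgroup_conj_class G ` UU)"
proof -
  have UW: "UU \<subseteq> WW" unfolding UU_def WW_def by auto
  have "calD QQ = card (subgroup_conj_class QQ ` (image cz) ` UU)"
    unfolding calD_def TQ_eq ..
  also have "subgroup_conj_class QQ ` (image cz) ` UU = (image (image cz)) ` (subgroup_conj_class G ` UU)"
  proof -
    have "subgroup_conj_class QQ ` (image cz) ` UU = (\<lambda>Y. subgroup_conj_class QQ (cz ` Y)) ` UU"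
      by (simp add: image_image)
    also have "\<dots> = (\<lambda>Y. (image cz) ` subgroup_conj_class G Y) ` UU"
      using UW unfolding WW_def by (intro image_cong[OF refl] cz_class) (auto dest: subgroup.subset)
    also have "\<dots> = (image (image cz)) ` (subgroup_conj_class G ` UU)"
      by (simp add: image_image)
    finally show ?thesis .
  qed
  also have "card \<dots> = card (subgroup_conj_class G ` UU)"
  proof (rule card_image)
    have "\<Union>(subgroup_conj_class G ` UU) \<subseteq> WW" using class_in_WW UW by blast
    then have "inj_on (image cz) (\<Union>(subgroup_conj_class G ` UU))" using cz_inj inj_on_subset by blast
    then show "inj_on (image (image cz)) (subgroup_conj_class G ` UU)" by (rule inj_on_image)
  qed
  finally show ?thesis .
qed

end

context group
begin

definition "TZ = {Y. subgroup Y G \<and> Y \<subseteq> center G \<and> Y \<noteq> {\<one>} \<and> Y \<noteq> center G}"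

lemma subgroup_Gz_iff:
  "subgroup Y (G\<lparr>carrier := center G\<rparr>) \<longleftrightarrow> subgroup Y G \<and> Y \<subseteq> center G"
proof
  assume h: "subgroup Y (G\<lparr>carrier := center G\<rparr>)"
  have "subgroup Y G" by (rule incl_subgroup[OF Z_sub h])
  moreover have "Y \<subseteq> center G" using subgroup.subset[OF h] by simp
  ultimately show "subgroup Y G \<and> Y \<subseteq> center G" by simp
next
  assume "subgroup Y G \<and> Y \<subseteq> center G"
  then show "subgroup Y (G\<lparr>carrier := center G\<rparr>)" using subgroup_incl[OF _ Z_sub] by blast
qed

lemma normalizer_Gz:
  assumes "Y \<subseteq> center G"
  shows "normalizer (G\<lparr>carrier := center G\<rparr>) Y = center G"
proof -
  have "\<And>g. g \<in> center G \<Longrightarrow>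
    g <#\<^bsub>G\<lparr>carrier := center G\<rparr>\<^esub> Y #>\<^bsub>G\<lparr>carrier := center G\<rparr>\<^esub> inv\<^bsub>G\<lparr>carrier := center G\<rparr>\<^esub> g = Y"
  proof -
    fix g assume g: "g \<in> center G"
    have "inv\<^bsub>G\<lparr>carrier := center G\<rparr>\<^esub> g = inv g" using m_inv_consistent[OF Z_sub g] .
    moreover have "g <# Y #> inv g = Y" using conj_central_set[OF assms] g Zc by blast
    ultimately show "g <#\<^bsub>G\<lparr>carrier := center G\<rparr>\<^esub> Y #>\<^bsub>G\<lparr>carrier := center G\<rparr>\<^esub> inv\<^bsub>G\<lparr>carrier := center G\<rparr>\<^esub> g = Y"
      by simp
  qed
  then show ?thesis using assms unfolding normalizer_def stabilizer_def by auto
qed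

lemma class_Gz:
  assumes "Y \<subseteq> center G"
  shows "subgroup_conj_class (G\<lparr>carrier := center G\<rparr>) Y = {Y}"
proof -
  have e: "\<And>g. g \<in> center G \<Longrightarrow>
    g <#\<^bsub>G\<lparr>carrier := center G\<rparr>\<^esub> Y #>\<^bsub>G\<lparr>carrier := center G\<rparr>\<^esub> inv\<^bsub>G\<lparr>carrier := center G\<rparr>\<^esub> g = Y"
  proof -
    fix g assume g: "g \<in> center G"
    have "inv\<^bsub>G\<lparr>carrier := center G\<rparr>\<^esub> g = inv g" using m_inv_consistent[OF Z_sub g] .
    moreover have "g <# Y #> inv g = Y" using conj_central_set[OF assms] g Zc by blast
    ultimately show "g <#\<^bsub>G\<lparr>carrier := center G\<rparr>\<^esub> Y #>\<^bsub>G\<lparr>carrier := center G\<rparr>\<^esub> inv\<^bsub>G\<lparr>carrier := center G\<rparr>\<^esub> g = Y"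
      by simp
  qed
  have "\<one> \<in> center G" using subgroup.one_closed[OF Z_sub] .
  then show ?thesis unfolding subgroup_conj_class_def using e by auto
qed

lemma class_central:
  assumes "Y \<subseteq> center G"
  shows "subgroup_conj_class G Y = {Y}"
  using class_normal conj_central_set[OF assms] by blast

lemma calD_Z: "calD (G\<lparr>carrier := center G\<rparr>) = card (subgroup_conj_class G ` TZ)"
proof -
  have T: "{Y. subgroup Y (G\<lparr>carrier := center G\<rparr>) \<and> Y \<noteq> {\<one>\<^bsub>G\<lparr>carrier := center G\<rparr>\<^esub>}
       \<and> normalizer (G\<lparr>carrier := center G\<rparr>) Y \<noteq> Y} = TZ"
    unfolding TZ_def subgroup_Gz_iff using normalizer_Gz by auto
  have "subgroup_conj_class (G\<lparr>carrier := center G\<rparr>) ` TZ = subgroup_conj_class G ` TZ"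
    by (intro image_cong[OF refl]) (simp add: TZ_def class_Gz class_central)
  then show ?thesis unfolding calD_def T by simp
qed

end

lemma (in group) card_sub_sub_dvd:
  assumes "subgroup K G" "subgroup H G" "K \<subseteq> H"
  shows "card K dvd card H"
proof -
  have K: "subgroup K (G\<lparr>carrier := H\<rparr>)" by (rule subgroup_incl[OF assms])
  interpret GH: group "G\<lparr>carrier := H\<rparr>" by (rule subgroup_imp_group[OF assms(2)])
  have "card (rcosets\<^bsub>G\<lparr>carrier := H\<rparr>\<^esub> K) * card K = order (G\<lparr>carrier := H\<rparr>)"
    by (rule GH.lagrange[OF K])
  moreover have "order (G\<lparr>carrier := H\<rparr>) = card H" by (simp add: order_def)
  moreover have "card K dvd card (rcosets\<^bsub>G\<lparr>carrier := H\<rparr>\<^esub> K) * card K" by (rule dvd_triv_right)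
  ultimately show ?thesis by simp
qed

lemma (in group) card_subgroup_dvd:
  assumes "subgroup H G"
  shows "card H dvd order G"
proof -
  have "card H dvd card (rcosets H) * card H" by (rule dvd_triv_right)
  then show ?thesis using lagrange[OF assms] by simp
qed

lemma (in group) pgroup_normalizer_grows:
  assumes fin: "finite (carrier G)" and p: "Factorial_Ring.prime (p::nat)" and ord: "order G = p ^ n"
    and H: "subgroup H G" and Hne: "H \<noteq> carrier G"
  shows "normalizer G H \<noteq> H"
proof
  assume N: "normalizer G H = H"
  define E where "E = {K. K \<subseteq> carrier G}"
  define \<phi> where "\<phi> = (\<lambda>g. \<lambda>K \<in> E. g <# K #> inv g)"
  have GA: "group_action G E \<phi>" unfolding E_def \<phi>_def by (rule action_by_conjugation_on_power_set)
  have Hc: "H \<subseteq> carrier G" using H subgroup.subset by blast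
  have HE: "H \<in> E" using Hc E_def by simp
  have phi: "\<phi> g K = g <# K #> inv g" if "K \<subseteq> carrier G" for g K
    using that unfolding \<phi>_def E_def by simp
  have stab: "stabilizer G \<phi> H = H" using N unfolding normalizer_def \<phi>_def E_def .
  define C where "C = orbit G \<phi> H"
  have os1: "card C * card H = order G"
    using group_action.orbit_stabilizer_theorem[OF GA HE] stab C_def by simp
  have finE: "finite E" using fin unfolding E_def by simp
  have CE: "C \<subseteq> E" unfolding C_def orbit_def using group_action.element_image[OF GA _ HE] by blast
  have finC: "finite C" using CE finE finite_subset by blast
  have Cchar: "K \<in> C \<longleftrightarrow> (\<exists>g \<in> carrier G. K = g <# H #> inv g)" for K
    unfolding C_def orbit_def using phi[OF Hc] by auto
  have HC: "H \<in> C" unfolding C_def by (rule group_action.orbit_refl[OF GA HE])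
  have p1: "p > 1" using p prime_gt_1_nat by blast
  have "card C dvd card C * card H" by (rule dvd_triv_left)
  then have "card C dvd p ^ n" using os1 ord by simp
  then obtain k where k: "k \<le> n" "card C = p ^ k" using divides_primepow_nat[OF p] by blast
  have "card C \<noteq> 1"
  proof
    assume "card C = 1"
    then have "card H = card (carrier G)" using os1 unfolding order_def by simp
    then show False using Hne Hc fin card_subset_eq by blast
  qed
  then have "k \<noteq> 0" using k by auto
  then have pC: "p dvd card C" using k by (simp add: dvd_power)
  have "card H dvd p ^ n" using card_subgroup_dvd[OF H] ord by simp
  then obtain m where m: "card H = p ^ m" using divides_primepow_nat[OF p] by blast
  have GH: "group_action (G\<lparr>carrier := H\<rparr>) E \<phi>" by (rule group_action.induced_action[OF GA H])
  define orbH where "orbH = (\<lambda>K. orbit (G\<lparr>carrier := H\<rparr>) \<phi> K)"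
  have orbH_char: "orbH K = {\<phi> h K | h. h \<in> H}" for K unfolding orbH_def orbit_def by simp
  have f2: "\<phi> h K \<in> C" if KK: "K \<in> C" "h \<in> H" for K h
  proof -
    obtain g where g: "g \<in> carrier G" "K = g <# H #> inv g" using Cchar[THEN iffD1, OF KK(1)] by blast
    have hc: "h \<in> carrier G" using KK(2) Hc by auto
    have Kc: "K \<subseteq> carrier G" unfolding g(2) by (rule conj_subset[OF g(1) Hc])
    have "h <# K #> inv h = (h \<otimes> g) <# H #> inv (h \<otimes> g)" unfolding g(2) by (rule conj_comp[OF hc g(1) Hc])
    then have "\<phi> h K = (h \<otimes> g) <# H #> inv (h \<otimes> g)" using phi[OF Kc] by simp
    moreover have "h \<otimes> g \<in> carrier G" using g hc by simp
    ultimately show ?thesis using Cchar[THEN iffD2] by blast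
  qed
  have f3: "\<exists>h \<in> H. \<phi> h K \<noteq> K" if K: "K \<in> C" "K \<noteq> H" for K
  proof (rule ccontr)
    assume "\<not> (\<exists>h \<in> H. \<phi> h K \<noteq> K)"
    then have fx: "\<And>h. h \<in> H \<Longrightarrow> \<phi> h K = K" by blast
    obtain g where g: "g \<in> carrier G" "K = g <# H #> inv g" using Cchar[THEN iffD1, OF K(1)] by blast
    have Kc: "K \<subseteq> carrier G" unfolding g(2) by (rule conj_subset[OF g(1) Hc])
    have "H \<subseteq> K"
    proof
      fix h assume h: "h \<in> H"
      have hc: "h \<in> carrier G" using h Hc by auto
      have e1: "h <# K #> inv h = K" using fx[OF h] phi[OF Kc] by simp
      have ig: "inv g \<in> carrier G" using g by simp
      have a1: "inv g <# (h <# K #> inv h) #> inv (inv g) = (inv g \<otimes> h) <# K #> inv (inv g \<otimes> h)"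
        by (rule conj_comp[OF ig hc Kc])
      have a2: "(inv g \<otimes> h) <# (g <# H #> inv g) #> inv (inv g \<otimes> h) = (inv g \<otimes> h \<otimes> g) <# H #> inv (inv g \<otimes> h \<otimes> g)"
        by (rule conj_comp) (use ig hc g Hc in auto)
      have a3: "inv g <# K #> inv (inv g) = H" unfolding g(2) by (rule conj_inv_cancel[OF g(1) Hc])
      have "(inv g \<otimes> h \<otimes> g) <# H #> inv (inv g \<otimes> h \<otimes> g) = (inv g \<otimes> h) <# (g <# H #> inv g) #> inv (inv g \<otimes> h)"
        using a2 by (rule sym)
      also have "\<dots> = (inv g \<otimes> h) <# K #> inv (inv g \<otimes> h)" unfolding g(2) ..
      also have "\<dots> = inv g <# (h <# K #> inv h) #> inv (inv g)" using a1 by (rule sym)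
      also have "\<dots> = inv g <# K #> inv (inv g)" unfolding e1 ..
      also have "\<dots> = H" by (rule a3)
      finally have "(inv g \<otimes> h \<otimes> g) <# H #> inv (inv g \<otimes> h \<otimes> g) = H" .
      then have "inv g \<otimes> h \<otimes> g \<in> normalizer G H" using normalizer_char[OF Hc] g hc by simp
      then have x: "inv g \<otimes> h \<otimes> g \<in> H" using N by simp
      have "h = g \<otimes> (inv g \<otimes> h \<otimes> g) \<otimes> inv g" using g hc by (simp add: m_assoc)
      then show "h \<in> K" using x g Hc by (auto simp: conj_eq_image)
    qed
    moreover have "card K = card H" using g conj_card Hc by simp
    ultimately have "H = K" using card_subset_eq[OF finite_subset[OF Kc fin]] by simp
    then show False using K by simp
  qed
  have f4: "p dvd card (orbH K)" if K: "K \<in> C" "K \<noteq> H" for K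
  proof -
    have KE: "K \<in> E" using K CE by blast
    have "card (orbH K) * card (stabilizer (G\<lparr>carrier := H\<rparr>) \<phi> K) = order (G\<lparr>carrier := H\<rparr>)"
      unfolding orbH_def by (rule group_action.orbit_stabilizer_theorem[OF GH KE])
    moreover have "order (G\<lparr>carrier := H\<rparr>) = p ^ m" using m by (simp add: order_def)
    moreover have "card (orbH K) dvd card (orbH K) * card (stabilizer (G\<lparr>carrier := H\<rparr>) \<phi> K)"
      by (rule dvd_triv_left)
    ultimately have "card (orbH K) dvd p ^ m" by simp
    then obtain i where i: "card (orbH K) = p ^ i" using divides_primepow_nat[OF p] by blast
    have Kin: "K \<in> orbH K" unfolding orbH_def by (rule group_action.orbit_refl[OF GH KE])
    have "i \<noteq> 0"
    proof
      assume "i = 0"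
      then have c1: "card (orbH K) = 1" using i by simp
      then obtain x where "orbH K = {x}" by (rule card_1_singletonE)
      then have "orbH K = {K}" using Kin by simp
      then have "\<And>h. h \<in> H \<Longrightarrow> \<phi> h K = K" unfolding orbH_char by blast
      then show False using f3[OF K] by blast
    qed
    then show ?thesis using i by (simp add: dvd_power)
  qed
  have f5: "orbH K \<subseteq> C - {H}" if K: "K \<in> C" "K \<noteq> H" for K
  proof
    fix L assume L: "L \<in> orbH K"
    then obtain h where h: "h \<in> H" "L = \<phi> h K" unfolding orbH_char by blast
    have "L \<in> C" using f2[OF K(1) h(1)] h by simp
    moreover have "L \<noteq> H"
    proof
      assume "L = H"
      then have "H \<in> orbH K" using L by simp
      then have "K \<in> orbH H" unfolding orbH_def
        using group_action.orbit_sym[OF GH _ HE] K CE by blast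
      then obtain h' where h': "h' \<in> H" "K = \<phi> h' H" unfolding orbH_char by blast
      have "h' \<in> normalizer G H" using subgroup_in_normalizer[OF H] h'(1) by blast
      then have "h' <# H #> inv h' = H" using normalizer_char[OF Hc] by simp
      then have "K = H" using h' phi[OF Hc] by simp
      then show False using K by simp
    qed
    ultimately show "L \<in> C - {H}" by simp
  qed
  define F where "F = orbH ` (C - {H})"
  have UF: "\<Union>F = C - {H}"
  proof
    show "\<Union>F \<subseteq> C - {H}" unfolding F_def using f5 by blast
  next
    show "C - {H} \<subseteq> \<Union>F"
    proof
      fix K assume K: "K \<in> C - {H}"
      then have "K \<in> orbH K" unfolding orbH_def using group_action.orbit_refl[OF GH] CE by blast
      then show "K \<in> \<Union>F" unfolding F_def using K by blast
    qed
  qed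
  have Forb: "F \<subseteq> orbits (G\<lparr>carrier := H\<rparr>) E \<phi>"
    unfolding F_def orbH_def orbits_def using CE by blast
  have disj: "pairwise disjnt F"
  proof (rule pairwiseI)
    fix A B assume "A \<in> F" "B \<in> F" "A \<noteq> B"
    then show "disjnt A B" using group_action.disjoint_union[OF GH] Forb unfolding disjnt_def by blast
  qed
  have finF: "finite A" if "A \<in> F" for A
  proof -
    have "A \<subseteq> C" using that UF by blast
    then show ?thesis using finC finite_subset by blast
  qed
  have "card (C - {H}) = sum card F" using card_Union_disjoint[OF disj finF] UF by simp
  moreover have "p dvd sum card F" by (rule dvd_sum) (use f4 F_def in auto)
  ultimately have "p dvd card (C - {H})" by simp
  moreover have "card C = card (C - {H}) + 1" using card_Suc_Diff1[OF finC HC] by simp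
  ultimately have "p dvd card (C - {H}) + 1" using pC by simp
  then have "p dvd 1" using \<open>p dvd card (C - {H})\<close> dvd_add_right_iff by blast
  then show False using p1 by simp
qed

lemma (in group) sylow_sub:
  assumes fin: "finite (carrier G)" and p: "Factorial_Ring.prime (p::nat)" and d: "p ^ a dvd order G"
  obtains S where "subgroup S G" "card S = p ^ a"
proof -
  obtain m where "order G = p ^ a * m" using d by (auto elim: dvdE)
  then show ?thesis using sylow_thm[OF p is_group _ fin] that by blast
qed

lemma (in group) bad_pgroup:
  assumes fin: "finite (carrier G)" and Zne1: "center G \<noteq> {\<one>}" and ZneG: "center G \<noteq> carrier G"
    and B: "\<And>Y. subgroup Y G \<Longrightarrow> Y \<subseteq> center G \<or> center G \<subseteq> Y"
  shows "\<exists>p n. Factorial_Ring.prime (p::nat) \<and> order G = p ^ n"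
proof -
  define N where "N = order G"
  have N0: "N \<noteq> 0" using fin one_closed unfolding N_def order_def by (auto simp: card_eq_0_iff)
  have finZ: "finite (center G)" using fin Zc finite_subset by blast
  have oneZ: "\<one> \<in> center G" using subgroup.one_closed[OF Z_sub] .
  have cZ1: "card (center G) \<noteq> 1"
  proof
    assume "card (center G) = 1"
    then obtain x where "center G = {x}" by (rule card_1_singletonE)
    then show False using oneZ Zne1 by simp
  qed
  have cZ0: "card (center G) \<noteq> 0" using finZ oneZ by auto
  obtain p where p: "Factorial_Ring.prime (p::nat)" "p dvd card (center G)" using prime_factor_nat[OF cZ1] by blast
  have ZdvdN: "card (center G) dvd N" unfolding N_def by (rule card_subgroup_dvd[OF Z_sub])
  show ?thesis
  proof (cases "\<exists>r S. Factorial_Ring.prime (r::nat) \<and> subgroup S G \<and> card S = r ^ multiplicity r N \<and> center G \<subseteq> S")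
    case False
    have "N dvd card (center G)"
    proof (rule multiplicity_le_imp_dvd[OF N0])
      fix r :: nat assume r: "Factorial_Ring.prime r"
      have "r ^ multiplicity r N dvd order G" using multiplicity_dvd[of r N] unfolding N_def .
      then obtain S where S: "subgroup S G" "card S = r ^ multiplicity r N" using sylow_sub[OF fin r] by blast
      then have "\<not> center G \<subseteq> S" using False r by blast
      then have "S \<subseteq> center G" using B[OF S(1)] by blast
      then have dv: "r ^ multiplicity r N dvd card (center G)" using card_sub_sub_dvd[OF S(1) Z_sub] S(2) by simp
      have nu: "\<not> is_unit r" using prime_gt_1_nat[OF r] by simp
      show "multiplicity r N \<le> multiplicity r (card (center G))" by (rule multiplicity_geI[OF cZ0 nu dv])
    qed
    then have "N \<le> card (center G)" using cZ0 by (simp add: dvd_imp_le)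
    moreover have "card (center G) \<le> N" unfolding N_def order_def using Zc fin by (rule card_mono[rotated])
    ultimately have "card (center G) = card (carrier G)" unfolding N_def order_def by simp
    then have "center G = carrier G" using card_subset_eq[OF fin Zc] by simp
    then show ?thesis using ZneG by simp
  next
    case True
    then obtain r S where rS: "Factorial_Ring.prime (r::nat)" "subgroup S G" "card S = r ^ multiplicity r N" "center G \<subseteq> S"
      by blast
    have "card (center G) dvd r ^ multiplicity r N" using card_sub_sub_dvd[OF Z_sub rS(2,4)] rS(3) by simp
    then obtain i where i: "card (center G) = r ^ i" using divides_primepow_nat[OF rS(1)] by blast
    have "p dvd r ^ i" using p(2) i by simp
    then have "p dvd r" by (rule prime_dvd_power[OF p(1)])
    then have pr: "p = r" using primes_dvd_imp_eq[OF p(1) rS(1)] by simp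
    have only_p: "q = p" if q: "Factorial_Ring.prime (q::nat)" "q dvd N" for q
    proof -
      have "q ^ 1 dvd order G" using q(2) unfolding N_def by simp
      then obtain Q where Q: "subgroup Q G" "card Q = q ^ 1" by (rule sylow_sub[OF fin q(1)])
      then have Q: "subgroup Q G" "card Q = q" by auto
      show "q = p"
      proof (cases "Q \<subseteq> center G")
        case True
        then have "q dvd card (center G)" using card_sub_sub_dvd[OF Q(1) Z_sub] Q(2) by simp
        then have "q dvd r ^ i" using i by simp
        then have "q dvd r" by (rule prime_dvd_power[OF q(1)])
        then show ?thesis using primes_dvd_imp_eq[OF q(1) rS(1)] pr by simp
      next
        case False
        then have "center G \<subseteq> Q" using B[OF Q(1)] by blast
        then have "card (center G) dvd q" using card_sub_sub_dvd[OF Z_sub Q(1)] Q(2) by simp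
        then have "card (center G) = 1 \<or> card (center G) = q" using prime_nat_iff[THEN iffD1, OF q(1)] by blast
        then have "card (center G) = q" using cZ1 by blast
        then have "p dvd q" using p(2) by simp
        then show ?thesis using primes_dvd_imp_eq[OF p(1) q(1)] by simp
      qed
    qed
    have "N dvd p ^ multiplicity p N"
    proof (rule multiplicity_le_imp_dvd[OF N0])
      fix q :: nat assume q: "Factorial_Ring.prime q"
      show "multiplicity q N \<le> multiplicity q (p ^ multiplicity p N)"
      proof (cases "q dvd N")
        case True
        then have "q = p" using only_p q by blast
        then show ?thesis using q by simp
      next
        case False
        then show ?thesis by (simp add: not_dvd_imp_multiplicity_0)
      qed
    qed
    moreover have "p ^ multiplicity p N dvd N" by (rule multiplicity_dvd)
    ultimately have "N = p ^ multiplicity p N" by (rule dvd_antisym)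
    then show ?thesis using p(1) unfolding N_def by blast
  qed
qed

context group
begin

lemma cyclic_center:
  assumes x: "x \<in> carrier G" and gen: "generate G {x} = carrier G"
  shows "center G = carrier G"
proof
  show "center G \<subseteq> carrier G" by (rule Zc)
next
  show "carrier G \<subseteq> center G"
  proof
    fix a assume a: "a \<in> carrier G"
    have pw: "\<And>y. y \<in> carrier G \<Longrightarrow> \<exists>k::int. y = x [^] k"
      using gen generate_pow[OF x] by blast
    obtain i :: int where i: "a = x [^] i" using pw[OF a] by blast
    have "a \<otimes> b = b \<otimes> a" if b: "b \<in> carrier G" for b
    proof -
      obtain j :: int where j: "b = x [^] j" using pw[OF b] by blast
      have "x [^] i \<otimes> x [^] j = x [^] (i + j)" using int_pow_mult[OF x] by simp
      also have "\<dots> = x [^] (j + i)" by (simp add: add.commute)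
      also have "\<dots> = x [^] j \<otimes> x [^] i" using int_pow_mult[OF x] by simp
      finally show ?thesis using i j by simp
    qed
    then show "a \<in> center G" unfolding center_def using a by blast
  qed
qed

definition "maxsub M \<longleftrightarrow> subgroup M G \<and> M \<noteq> carrier G \<and>
   (\<forall>K. subgroup K G \<longrightarrow> M \<subseteq> K \<longrightarrow> K \<noteq> carrier G \<longrightarrow> K = M)"

lemma exists_maxsub:
  assumes fin: "finite (carrier G)" and H: "subgroup H G" "H \<noteq> carrier G"
  obtains M where "maxsub M" "H \<subseteq> M"
proof -
  define S where "S = {K. subgroup K G \<and> H \<subseteq> K \<and> K \<noteq> carrier G}"
  have "S \<subseteq> Pow (carrier G)" unfolding S_def using subgroup.subset by blast
  then have finS: "finite S" using fin finite_subset by blast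
  have "H \<in> S" using H unfolding S_def by simp
  then have "S \<noteq> {}" by blast
  then obtain M where M: "M \<in> S" "\<forall>K \<in> S. M \<subseteq> K \<longrightarrow> M = K"
    using finite_has_maximal[OF finS] by blast
  have "maxsub M" unfolding maxsub_def
  proof (intro conjI allI impI)
    show "subgroup M G" "M \<noteq> carrier G" using M(1) unfolding S_def by auto
    fix K assume K: "subgroup K G" "M \<subseteq> K" "K \<noteq> carrier G"
    have "H \<subseteq> K" using M(1) K(2) unfolding S_def by auto
    then have "K \<in> S" using K unfolding S_def by simp
    then show "K = M" using M(2) K(2) by blast
  qed
  moreover have "H \<subseteq> M" using M(1) unfolding S_def by simp
  ultimately show ?thesis using that by blast
qed

lemma maxsub_normal:
  assumes fin: "finite (carrier G)" and p: "Factorial_Ring.prime (p::nat)" and ord: "order G = p ^ n"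
    and M: "maxsub M"
  shows "normalizer G M = carrier G"
proof (rule ccontr)
  assume ne: "normalizer G M \<noteq> carrier G"
  have Ms: "subgroup M G" "M \<noteq> carrier G" using M unfolding maxsub_def by auto
  have Mc: "M \<subseteq> carrier G" using Ms subgroup.subset by blast
  have "subgroup (normalizer G M) G" by (rule normalizer_imp_subgroup[OF Mc])
  moreover have "M \<subseteq> normalizer G M" by (rule subgroup_in_normalizer[OF Ms(1)])
  ultimately have "normalizer G M = M" using M ne unfolding maxsub_def by blast
  then show False using pgroup_normalizer_grows[OF fin p ord Ms] by simp
qed

lemma bad_case:
  assumes fin: "finite (carrier G)" and Zne1: "center G \<noteq> {\<one>}" and ZneG: "center G \<noteq> carrier G"
    and B: "\<And>Y. subgroup Y G \<Longrightarrow> Y \<subseteq> center G \<or> center G \<subseteq> Y"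
  shows "3 \<le> card (subgroup_conj_class G ` UU)"
proof -
  obtain p n where p: "Factorial_Ring.prime (p::nat)" and ord: "order G = p ^ n"
    using bad_pgroup[OF fin Zne1 ZneG B] by blast
  have gen_proper: "generate G {x} \<noteq> carrier G" if x: "x \<in> carrier G" for x
    using cyclic_center[OF x] ZneG by blast
  have gen_sub: "subgroup (generate G {x}) G" if x: "x \<in> carrier G" for x
    using generate_is_subgroup x by simp
  have gen_x: "x \<in> generate G {x}" for x by (rule generate.incl) simp
  have props: "M \<in> UU \<and> subgroup_conj_class G M = {M}" if M: "maxsub M" for M
  proof -
    have Ms: "subgroup M G" "M \<noteq> carrier G" using M unfolding maxsub_def by auto
    have N: "normalizer G M = carrier G" by (rule maxsub_normal[OF fin p ord M])
    have Mc: "M \<subseteq> carrier G" using Ms subgroup.subset by blast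
    have cl: "subgroup_conj_class G M = {M}"
      using class_normal normalizer_char[OF Mc] N by blast
    have MneZ: "M \<noteq> center G"
    proof
      assume MZ: "M = center G"
      obtain x where x: "x \<in> carrier G" "x \<notin> center G" using ZneG Zc by blast
      have "\<not> generate G {x} \<subseteq> center G" using x gen_x by blast
      then have "center G \<subseteq> generate G {x}" using B[OF gen_sub[OF x(1)]] by blast
      then have "generate G {x} = M" using M gen_sub[OF x(1)] gen_proper[OF x(1)] MZ unfolding maxsub_def by blast
      then show False using x gen_x MZ by blast
    qed
    have "center G \<subseteq> M"
    proof (rule ccontr)
      assume "\<not> center G \<subseteq> M"
      then have "M \<subseteq> center G" using B[OF Ms(1)] by blast
      then have "center G = M" using M Z_sub ZneG unfolding maxsub_def by blast
      then show False using MneZ by simp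
    qed
    then have "M \<in> UU" unfolding UU_def using Ms MneZ N by auto
    then show ?thesis using cl by simp
  qed
  obtain M1 where M1: "maxsub M1" "center G \<subseteq> M1" using exists_maxsub[OF fin Z_sub ZneG] by blast
  have M1s: "subgroup M1 G" "M1 \<noteq> carrier G" using M1 unfolding maxsub_def by auto
  have M1c: "M1 \<subseteq> carrier G" using M1s subgroup.subset by blast
  obtain h where h: "h \<in> carrier G" "h \<notin> M1" using M1s(2) M1c by blast
  obtain M2 where M2: "maxsub M2" "generate G {h} \<subseteq> M2"
    using exists_maxsub[OF fin gen_sub[OF h(1)] gen_proper[OF h(1)]] by blast
  have hM2: "h \<in> M2" using M2(2) gen_x by blast
  have M2s: "subgroup M2 G" "M2 \<noteq> carrier G" using M2 unfolding maxsub_def by auto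
  have "\<not> M1 \<subseteq> M2"
  proof
    assume "M1 \<subseteq> M2"
    then have "M2 = M1" using M1 M2s unfolding maxsub_def by blast
    then show False using hM2 h by simp
  qed
  then obtain g where g: "g \<in> M1" "g \<notin> M2" by blast
  have gc: "g \<in> carrier G" using g M1c by blast
  define k where "k = g \<otimes> h"
  have kc: "k \<in> carrier G" unfolding k_def using gc h by simp
  obtain M3 where M3: "maxsub M3" "generate G {k} \<subseteq> M3"
    using exists_maxsub[OF fin gen_sub[OF kc] gen_proper[OF kc]] by blast
  have kM3: "k \<in> M3" using M3(2) gen_x by blast
  have M3s: "subgroup M3 G" using M3 unfolding maxsub_def by auto
  have "k \<notin> M1"
  proof
    assume "k \<in> M1"
    then have "inv g \<otimes> k \<in> M1" using g(1) M1s(1) subgroup.m_closed subgroup.m_inv_closed by metis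
    moreover have "inv g \<otimes> k = h" unfolding k_def using gc h by simp
    ultimately show False using h by simp
  qed
  have "k \<notin> M2"
  proof
    assume "k \<in> M2"
    then have "k \<otimes> inv h \<in> M2" using hM2 M2s(1) subgroup.m_closed subgroup.m_inv_closed by metis
    moreover have "k \<otimes> inv h = g" unfolding k_def using gc h by (simp add: m_assoc)
    ultimately show False using g by simp
  qed
  have d12: "M1 \<noteq> M2" using h hM2 by blast
  have d13: "M1 \<noteq> M3" using \<open>k \<notin> M1\<close> kM3 by blast
  have d23: "M2 \<noteq> M3" using \<open>k \<notin> M2\<close> kM3 by blast
  have sub: "{{M1}, {M2}, {M3}} \<subseteq> subgroup_conj_class G ` UU"
    using props[OF M1(1)] props[OF M2(1)] props[OF M3(1)] by (metis empty_subsetI image_eqI insert_subset)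
  have "UU \<subseteq> Pow (carrier G)" unfolding UU_def using subgroup.subset by blast
  then have "finite UU" using fin finite_subset by blast
  then have fin2: "finite (subgroup_conj_class G ` UU)" by simp
  have "card {{M1}, {M2}, {M3}} = 3" using d12 d13 d23 by simp
  then show ?thesis using card_mono[OF fin2 sub] by simp
qed

end

context group
begin

lemma center_in_normalizer:
  assumes "Y \<subseteq> carrier G"
  shows "center G \<subseteq> normalizer G Y"
proof
  fix z assume z: "z \<in> center G"
  have zc: "z \<in> carrier G" using z Zc by blast
  have "z <# Y #> inv z = Y"
  proof -
    have "(\<lambda>y. z \<otimes> y \<otimes> inv z) ` Y = (\<lambda>y. y) ` Y"
    proof (rule image_cong[OF refl])
      fix y assume "y \<in> Y"
      then have y: "y \<in> carrier G" using assms by blast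
      have "z \<otimes> y = y \<otimes> z" using z y unfolding center_def by blast
      then have "z \<otimes> y \<otimes> inv z = y \<otimes> z \<otimes> inv z" by simp
      also have "\<dots> = y" using y zc by (simp add: m_assoc)
      finally show "z \<otimes> y \<otimes> inv z = y" .
    qed
    then show ?thesis using conj_eq_image[OF zc assms] by simp
  qed
  then show "z \<in> normalizer G Y" using normalizer_char[OF assms] zc by blast
qed

lemma good_case_count:
  assumes fin: "finite (carrier G)" and Zne1: "center G \<noteq> {\<one>}" and ZneG: "center G \<noteq> carrier G"
    and Y0: "subgroup Y0 G" "\<not> Y0 \<subseteq> center G" "\<not> center G \<subseteq> Y0"
  shows "card (subgroup_conj_class G ` TZ) + card (subgroup_conj_class G ` UU) + 2 \<le> calD G"
proof -
  define TG where "TG = {Y. subgroup Y G \<and> Y \<noteq> {\<one>} \<and> normalizer G Y \<noteq> Y}"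
  define A where "A = subgroup_conj_class G ` TZ"
  define B where "B = subgroup_conj_class G ` UU"
  define c1 where "c1 = subgroup_conj_class G (center G)"
  define c2 where "c2 = subgroup_conj_class G Y0"
  have cD: "calD G = card (subgroup_conj_class G ` TG)" unfolding calD_def TG_def ..
  have "TG \<subseteq> Pow (carrier G)" unfolding TG_def using subgroup.subset by blast
  then have finTG: "finite TG" using fin finite_subset by blast
  have oneZ: "\<one> \<in> center G" using subgroup.one_closed[OF Z_sub] .
  have Y0c: "Y0 \<subseteq> carrier G" using Y0(1) subgroup.subset by blast
  have normZ: "normalizer G Y = carrier G" if "Y \<subseteq> center G" for Y
  proof -
    have Yc: "Y \<subseteq> carrier G" using that Zc by blast
    show ?thesis using normalizer_char[OF Yc] conj_central_set[OF that] by auto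
  qed
  have TZ_TG: "TZ \<subseteq> TG"
  proof
    fix Y assume "Y \<in> TZ"
    then have Y: "subgroup Y G" "Y \<subseteq> center G" "Y \<noteq> {\<one>}" unfolding TZ_def by auto
    have "Y \<noteq> carrier G" using Y(2) ZneG Zc by blast
    then show "Y \<in> TG" unfolding TG_def using Y normZ[OF Y(2)] by simp
  qed
  have UU_TG: "UU \<subseteq> TG"
  proof
    fix Y assume "Y \<in> UU"
    then have Y: "subgroup Y G" "center G \<subseteq> Y" "normalizer G Y \<noteq> Y" unfolding UU_def by auto
    have "Y \<noteq> {\<one>}" using Y(2) Zne1 oneZ by blast
    then show "Y \<in> TG" unfolding TG_def using Y by simp
  qed
  have Z_TG: "center G \<in> TG" unfolding TG_def using Z_sub Zne1 normZ[of "center G"] ZneG by simp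
  have Y0_TG: "Y0 \<in> TG"
  proof -
    have "Y0 \<noteq> {\<one>}" using Y0(2) oneZ by blast
    moreover have "normalizer G Y0 \<noteq> Y0" using center_in_normalizer[OF Y0c] Y0(3) by blast
    ultimately show ?thesis unfolding TG_def using Y0(1) by simp
  qed
  have sub: "A \<union> B \<union> {c1, c2} \<subseteq> subgroup_conj_class G ` TG"
    unfolding A_def B_def c1_def c2_def using TZ_TG UU_TG Z_TG Y0_TG by blast
  have A_form: "\<exists>Y. C = {Y} \<and> Y \<subseteq> center G \<and> Y \<noteq> center G" if CA: "C \<in> A" for C
  proof -
    obtain Y where "Y \<in> TZ" "C = subgroup_conj_class G Y" using CA unfolding A_def by blast
    then show ?thesis using class_central unfolding TZ_def by auto
  qed
  have B_form: "\<exists>Y. Y \<in> C \<and> center G \<subseteq> Y \<and> Y \<noteq> center G \<and> Y \<subseteq> carrier G \<and> C = subgroup_conj_class G Y" if CB: "C \<in> B" for C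
  proof -
    obtain Y where Y: "Y \<in> UU" "C = subgroup_conj_class G Y" using CB unfolding B_def by blast
    have Yc: "Y \<subseteq> carrier G" using Y(1) unfolding UU_def using subgroup.subset by blast
    show ?thesis using Y class_self[OF Yc] Yc unfolding UU_def by auto
  qed
  have c1_eq: "c1 = {center G}" unfolding c1_def by (rule class_central) simp
  have Y0in: "Y0 \<in> c2" unfolding c2_def by (rule class_self[OF Y0c])
  have AB: "A \<inter> B = {}"
  proof (rule ccontr)
    assume "A \<inter> B \<noteq> {}"
    then obtain C where C: "C \<in> A" "C \<in> B" by blast
    obtain Y where Y: "C = {Y}" "Y \<subseteq> center G" "Y \<noteq> center G" using A_form[OF C(1)] by blast
    obtain Y' where Y': "Y' \<in> C" "center G \<subseteq> Y'" "Y' \<noteq> center G" using B_form[OF C(2)] by blast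
    show False using Y Y' by blast
  qed
  have c1A: "c1 \<notin> A" using A_form c1_eq by fastforce
  have c1B: "c1 \<notin> B"
  proof
    assume "c1 \<in> B"
    then obtain Y' where "Y' \<in> c1" "Y' \<noteq> center G" using B_form by blast
    then show False using c1_eq by simp
  qed
  have c2A: "c2 \<notin> A"
  proof
    assume "c2 \<in> A"
    then obtain Y where "c2 = {Y}" "Y \<subseteq> center G" using A_form by blast
    then show False using Y0in Y0(2) by simp
  qed
  have c2B: "c2 \<notin> B"
  proof
    assume "c2 \<in> B"
    then obtain Y' where Y': "center G \<subseteq> Y'" "Y' \<subseteq> carrier G" "c2 = subgroup_conj_class G Y'"
      using B_form by blast
    have "Y0 \<in> subgroup_conj_class G Y'" using Y0in Y'(3) by simp
    then have "center G \<subseteq> Y0" using class_center_inv[OF _ Y'(2)] Y'(1) by blast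
    then show False using Y0(3) by simp
  qed
  have c12: "c1 \<noteq> c2" using c1_eq Y0in Y0(2) by auto
  have "TZ \<subseteq> TG" "UU \<subseteq> TG" by (rule TZ_TG, rule UU_TG)
  then have "finite TZ" "finite UU" using finTG finite_subset by auto
  then have finA: "finite A" and finB: "finite B" unfolding A_def B_def by auto
  have "card (A \<union> B \<union> {c1, c2}) = card (A \<union> B) + card {c1, c2}"
    by (rule card_Un_disjoint) (use finA finB c1A c1B c2A c2B in auto)
  also have "card (A \<union> B) = card A + card B" by (rule card_Un_disjoint[OF finA finB AB])
  also have "card {c1, c2} = 2" using c12 by simp
  finally have "card (A \<union> B \<union> {c1, c2}) = card A + card B + 2" .
  moreover have "card (A \<union> B \<union> {c1, c2}) \<le> card (subgroup_conj_class G ` TG)"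
    by (rule card_mono[OF _ sub]) (use finTG in simp)
  ultimately show ?thesis unfolding A_def B_def cD by simp
qed

end

theorem mainTheorem13:
  fixes G (structure)
  assumes "group G"
    and "finite (carrier G)"
    and "center G \<noteq> {\<one>}"
    and "calD (G Mod (center G)) = 2"
  shows "int (calD G) - int (calD (G\<lparr>carrier := center G\<rparr>)) \<ge> 4"
proof -
  interpret group G by fact
  have c2: "card (subgroup_conj_class G ` UU) = 2" using calD_Q assms(4) by simp
  have ZneG: "center G \<noteq> carrier G"
  proof
    assume ZG: "center G = carrier G"
    have "UU = {}"
    proof (rule ccontr)
      assume "UU \<noteq> {}"
      then obtain Y where "Y \<in> UU" by blast
      then have "subgroup Y G" "center G \<subseteq> Y" "Y \<noteq> center G" unfolding UU_def by auto
      then show False using ZG subgroup.subset by blast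
    qed
    then show False using c2 by simp
  qed
  show ?thesis
  proof (cases "\<exists>Y0. subgroup Y0 G \<and> \<not> Y0 \<subseteq> center G \<and> \<not> center G \<subseteq> Y0")
    case True
    then obtain Y0 where Y0: "subgroup Y0 G" "\<not> Y0 \<subseteq> center G" "\<not> center G \<subseteq> Y0" by blast
    have "card (subgroup_conj_class G ` TZ) + card (subgroup_conj_class G ` UU) + 2 \<le> calD G"
      by (rule good_case_count[OF assms(2,3) ZneG Y0])
    then have "calD (G\<lparr>carrier := center G\<rparr>) + 4 \<le> calD G" using calD_Z c2 by simp
    then show ?thesis by simp
  next
    case False
    then have B: "\<And>Y. subgroup Y G \<Longrightarrow> Y \<subseteq> center G \<or> center G \<subseteq> Y" by blast
    have "3 \<le> card (subgroup_conj_class G ` UU)" by (rule bad_case[OF assms(2,3) ZneG B])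
    then show ?thesis using c2 by simp
  qed
qed

end
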